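(* Let $\mathcal{M}_i=(E_i,\rho_i)$, $i=1,2$, be $q$-matroids and $E=E_1\oplus E_2$. Choose non-degenerate symmetric bilinear forms $\langle\cdot,\cdot\rangle_i$ on $E_i$ and define $\langle v_1+v_2,w_1+w_2\rangle=\langle v_1,w_1\rangle_1+\langle v_2,w_2\rangle_2$ for $v_i,w_i\in E_i$. Then $\langle\cdot,\cdot\rangle$ is a non-degenerate symmetric bilinear form on $E$ and \[ (\mathcal{M}_1\oplus\mathcal{M}_2)^*=\mathcal{M}_1^*\oplus\mathcal{M}_2^*, \] where $\mathcal{M}_i^*$ is the dual with respect to $\langle\cdot,\cdot\rangle_i$ and $(\mathcal{M}_1\oplus\mathcal{M}_2)^*$ the dual with respect to $\langle\cdot,\cdot\rangle$.
   Context: Let $\mathbb{F}=\mathbb{F}_q$. A $q$-matroid is $\mathcal{M}=(E,\rho)$, $E$ a finite-dimensional $\mathbb{F}$-vector space, $\rho$ from subspaces to $\mathbb{Z}_{\ge0}$ with $0\le\rho(V)\le\dim V$, monotone and submodular. Given a non-degenerate symmetric bilinear form on $E$ with orthogonal spaces $V^\perp$, the dual of $\mathcal{M}$ is $\mathcal{M}^*=(E,\rho^* )$ with $\rho^*(V)=\dim V+\rho(V^\perp)-\rho(E)$. Direct sum: for $E=E_1\oplus E_2$ with projections $\pi_i:E\to E_i$, $\mathcal{M}_1\oplus\mathcal{M}_2=(E,\rho)$ where $\rho(V)=\dim V+\min_{X\le V}(\rho_1(\pi_1(X))+\rho_2(\pi_2(X))-\dim X)$. *)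

theory Defs
  imports "HOL-Analysis.Analysis"
begin

text \<open>Finite-dimensional spaces over a finite field F = 'a are represented as
coordinate spaces 'a ^ 'n.  Rank functions are integer valued (with the
nonnegativity required explicitly), so that the subtraction in the dual is exact.\<close>

definition qsubspace :: "('a::field ^ 'n) set \<Rightarrow> bool" where
  "qsubspace V \<longleftrightarrow> vec.subspace V"

definition qdim :: "('a::field ^ 'n) set \<Rightarrow> int" where
  "qdim V = int (vec.dim V)"

definition qmatroid :: "(('a::{field,finite} ^ 'n) set \<Rightarrow> int) \<Rightarrow> bool" where
  "qmatroid \<rho> \<longleftrightarrow>
     (\<forall>V. qsubspace V \<longrightarrow> 0 \<le> \<rho> V \<and> \<rho> V \<le> qdim V) \<and>
     (\<forall>V W. qsubspace V \<and> qsubspace W \<and> V \<subseteq> W \<longrightarrow> \<rho> V \<le> \<rho> W) \<and>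
     (\<forall>V W. qsubspace V \<and> qsubspace W \<longrightarrow>
        \<rho> (vec.span (V \<union> W)) + \<rho> (V \<inter> W) \<le> \<rho> V + \<rho> W)"

definition sym_bilinear_nondeg :: "('a::field ^ 'n \<Rightarrow> 'a ^ 'n \<Rightarrow> 'a) \<Rightarrow> bool" where
  "sym_bilinear_nondeg B \<longleftrightarrow>
     (\<forall>x. Vector_Spaces.linear (*s) (*) (B x)) \<and>
     (\<forall>x y. B x y = B y x) \<and>
     (\<forall>x. (\<forall>y. B x y = 0) \<longrightarrow> x = 0)"

definition orth :: "('a::field ^ 'n \<Rightarrow> 'a ^ 'n \<Rightarrow> 'a) \<Rightarrow> ('a ^ 'n) set \<Rightarrow> ('a ^ 'n) set" where
  "orth B V = {w. \<forall>v\<in>V. B v w = 0}"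

definition qdual :: "('a::field ^ 'n \<Rightarrow> 'a ^ 'n \<Rightarrow> 'a) \<Rightarrow> (('a ^ 'n) set \<Rightarrow> int)
    \<Rightarrow> ('a ^ 'n) set \<Rightarrow> int" where
  "qdual B \<rho> V = qdim V + \<rho> (orth B V) - \<rho> UNIV"

text \<open>E = E1 \<oplus> E2 realised as 'a ^ ('n + 'm).\<close>

definition proj1 :: "'a ^ ('n::finite + 'm::finite) \<Rightarrow> 'a ^ 'n" where
  "proj1 v = (\<chi> j. v $ Inl j)"

definition proj2 :: "'a ^ ('n::finite + 'm::finite) \<Rightarrow> 'a ^ 'm" where
  "proj2 v = (\<chi> j. v $ Inr j)"

definition qdirect_sum :: "(('a::{field,finite} ^ 'n) set \<Rightarrow> int) \<Rightarrow> (('a ^ 'm) set \<Rightarrow> int)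
    \<Rightarrow> ('a ^ ('n + 'm)) set \<Rightarrow> int" where
  "qdirect_sum \<rho>1 \<rho>2 V = qdim V +
     Min {\<rho>1 (proj1 ` X) + \<rho>2 (proj2 ` X) - qdim X | X. qsubspace X \<and> X \<subseteq> V}"

definition sum_form :: "('a::field ^ 'n \<Rightarrow> 'a ^ 'n \<Rightarrow> 'a) \<Rightarrow> ('a ^ 'm \<Rightarrow> 'a ^ 'm \<Rightarrow> 'a)
    \<Rightarrow> 'a ^ ('n + 'm) \<Rightarrow> 'a ^ ('n + 'm) \<Rightarrow> 'a" where
  "sum_form B1 B2 v w = B1 (proj1 v) (proj1 w) + B2 (proj2 v) (proj2 w)"

end

theory Submission imports Defs "HOL-Library.Cardinality"
begin

lemma sbn_lin2:
  assumes "sym_bilinear_nondeg B"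
  shows "B x (y + z) = B x y + B x z" "B x (c *s y) = c * B x y" "B x 0 = 0"
    "B (y + z) x = B y x + B z x" "B (c *s y) x = c * B y x" "B 0 x = 0"
proof -
  have l: "\<And>x. Vector_Spaces.linear (*s) (*) (B x)" and s: "\<And>x y. B x y = B y x"
    using assms unfolding sym_bilinear_nondeg_def by auto
  interpret l: Vector_Spaces.linear "(*s)" "(*)" "B x" by (rule l)
  show a: "B x (y + z) = B x y + B x z" "B x (c *s y) = c * B x y" "B x 0 = 0"
    by (auto simp: l.add l.scale l.zero)
  interpret l2: Vector_Spaces.linear "(*s)" "(*)" "B y" by (rule l)
  interpret l3: Vector_Spaces.linear "(*s)" "(*)" "B z" by (rule l)
  interpret l0: Vector_Spaces.linear "(*s)" "(*)" "B 0" by (rule l)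
  show "B (y + z) x = B y x + B z x" "B (c *s y) x = c * B y x" "B 0 x = 0"
    by (simp_all only: s[of "y+z" x] s[of y x] s[of z x] s[of "c *s y" x] s[of 0 x] l.add l.scale l.zero)
qed

lemma orth_subspace:
  assumes "sym_bilinear_nondeg B"
  shows "vec.subspace (orth B U)"
  unfolding vec.subspace_def orth_def using sbn_lin2[OF assms] by auto

lemma orth_anti: "U \<subseteq> W \<Longrightarrow> orth B W \<subseteq> orth B U"
  unfolding orth_def by auto

lemma orth_Un: "orth B (U \<union> W) = orth B U \<inter> orth B W"
  unfolding orth_def by auto

lemma orth_insert: "orth B (insert s S) = orth B S \<inter> {w. B s w = 0}"
  unfolding orth_def by auto

lemma orth_span:
  assumes "sym_bilinear_nondeg B"
  shows "orth B (vec.span U) = orth B U"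
proof
  show "orth B (vec.span U) \<subseteq> orth B U" by (rule orth_anti) (rule vec.span_superset)
next
  have s: "\<And>x y. B x y = B y x" using assms unfolding sym_bilinear_nondeg_def by auto
  show "orth B U \<subseteq> orth B (vec.span U)"
  proof
    fix w assume w: "w \<in> orth B U"
    have "vec.subspace {v. B v w = 0}"
      unfolding vec.subspace_def using sbn_lin2[OF assms] by auto
    moreover have "U \<subseteq> {v. B v w = 0}" using w unfolding orth_def by auto
    ultimately have "vec.span U \<subseteq> {v. B v w = 0}" by (rule vec.span_minimal[rotated])
    then show "w \<in> orth B (vec.span U)" unfolding orth_def by auto
  qed
qed

lemma orth_orth: 
  assumes "sym_bilinear_nondeg B"
  shows "U \<subseteq> orth B (orth B U)"
  using assms unfolding orth_def sym_bilinear_nondeg_def by auto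

lemma hyperplane_dim:
  fixes f :: "'a::field ^ 'n \<Rightarrow> 'a"
  assumes W: "vec.subspace W" and f: "Vector_Spaces.linear (*s) (*) f"
  shows "vec.dim W \<le> vec.dim (W \<inter> {x. f x = 0}) + 1"
proof (cases "\<forall>w\<in>W. f w = 0")
  case True
  then have "W \<inter> {x. f x = 0} = W" by auto
  then show ?thesis by simp
next
  case False
  interpret f: Vector_Spaces.linear "(*s)" "(*)" f by (rule f)
  define K where "K = W \<inter> {x. f x = 0}"
  from False obtain w0 where w0: "w0 \<in> W" "f w0 \<noteq> 0" by auto
  have "W \<subseteq> vec.span (insert w0 K)"
  proof
    fix w assume w: "w \<in> W"
    define c where "c = f w / f w0"
    have "w - c *s w0 \<in> K"
      unfolding K_def using w w0 W
      by (auto simp: f.diff f.scale c_def vec.subspace_diff vec.subspace_scale)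
    then have "w - c *s w0 \<in> vec.span (insert w0 K)" by (simp add: vec.span_base)
    moreover have "c *s w0 \<in> vec.span (insert w0 K)" by (simp add: vec.span_base vec.span_scale)
    ultimately have "(w - c *s w0) + c *s w0 \<in> vec.span (insert w0 K)" by (rule vec.span_add)
    then show "w \<in> vec.span (insert w0 K)" by simp
  qed
  then have "vec.dim W \<le> vec.dim (vec.span (insert w0 K))" by (rule vec.dim_subset)
  also have "\<dots> \<le> vec.dim K + 1" by (simp add: vec.dim_insert)
  finally show ?thesis unfolding K_def .
qed


lemma orth_card_dim:
  assumes B: "sym_bilinear_nondeg B" and fin: "finite S" and W: "vec.subspace W"
  shows "vec.dim W \<le> vec.dim (W \<inter> orth B S) + card S"
  using fin
proof (induction S rule: finite_induct)
  case empty
  then show ?case by (simp add: orth_def)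
next
  case (insert s S)
  have l: "Vector_Spaces.linear (*s) (*) (B s)" using B unfolding sym_bilinear_nondeg_def by auto
  have sub: "vec.subspace (W \<inter> orth B S)" using W orth_subspace[OF B] by (rule vec.subspace_inter)
  have "vec.dim (W \<inter> orth B S) \<le> vec.dim ((W \<inter> orth B S) \<inter> {x. B s x = 0}) + 1"
    by (rule hyperplane_dim[OF sub l])
  moreover have "(W \<inter> orth B S) \<inter> {x. B s x = 0} = W \<inter> orth B (insert s S)"
    by (auto simp: orth_insert)
  ultimately show ?case using insert by simp
qed

lemma orth_dim:
  fixes B :: "'a::field ^ 'n \<Rightarrow> 'a ^ 'n \<Rightarrow> 'a"
  assumes B: "sym_bilinear_nondeg B"
  shows "vec.dim (orth B U) + vec.dim U = vec.dim (UNIV :: ('a ^ 'n) set)"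
proof -
  obtain S where S: "S \<subseteq> vec.span U" "vec.independent S" "vec.span U \<subseteq> vec.span S"
     "card S = vec.dim (vec.span U)"
    using vec.basis_exists by blast
  have finS: "finite S" using S(2) by (rule vec.finiteI_independent)
  have spS: "vec.span S = vec.span U"
  proof
    show "vec.span S \<subseteq> vec.span U" using vec.span_minimal[OF S(1)] by simp
    show "vec.span U \<subseteq> vec.span S" using S(3) .
  qed
  have oS: "orth B U = orth B S"
    using orth_span[OF B, of U] orth_span[OF B, of S] spS by simp
  have cS: "card S = vec.dim U" using S(4) by simp
  have lo: "vec.dim (UNIV :: ('a ^ 'n) set) \<le> vec.dim (orth B S) + card S"
    using orth_card_dim[OF B finS vec.subspace_UNIV] by simp
  obtain T where T: "S \<subseteq> T" "vec.independent T" "UNIV \<subseteq> vec.span T"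
    by (rule vec.maximal_independent_subset_extend[OF subset_UNIV S(2)])
  have finT: "finite T" using T(2) by (rule vec.finiteI_independent)
  have spT: "vec.span T = UNIV" using T(3) by blast
  have cT: "card T = vec.dim (UNIV :: ('a ^ 'n) set)"
    using vec.dim_span_eq_card_independent[OF T(2)] unfolding spT by (rule sym)
  have oT: "orth B T = {0}"
  proof -
    have "orth B T = orth B UNIV" using orth_span[OF B, of T] spT by simp
    also have "\<dots> = {0}"
    proof
      show "orth B UNIV \<subseteq> {0}"
      proof
        fix w assume "w \<in> orth B UNIV"
        then have "\<forall>v. B v w = 0" unfolding orth_def by auto
        moreover have "\<forall>v. B v w = B w v" using B unfolding sym_bilinear_nondeg_def by metis
        ultimately have "\<forall>v. B w v = 0" by simp
        then have "w = 0" using B unfolding sym_bilinear_nondeg_def by blast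
        then show "w \<in> {0}" by simp
      qed
      show "{0} \<subseteq> orth B UNIV" using sbn_lin2[OF B] unfolding orth_def by auto
    qed
    finally show ?thesis .
  qed
  have "vec.dim (orth B S) \<le> vec.dim (orth B S \<inter> orth B (T - S)) + card (T - S)"
    by (rule orth_card_dim[OF B _ orth_subspace[OF B]]) (use finT in auto)
  moreover have "orth B S \<inter> orth B (T - S) = {0}"
  proof -
    have "S \<union> (T - S) = T" using T(1) by auto
    then show ?thesis using oT orth_Un[of B S "T - S"] by simp
  qed
  moreover have "card (T - S) = card T - card S"
    using T(1) finS by (simp add: card_Diff_subset)
  moreover have "card S \<le> card T" using T(1) finT by (simp add: card_mono)
  ultimately have up: "vec.dim (orth B S) + card S \<le> vec.dim (UNIV :: ('a ^ 'n) set)"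
    using cT by (simp add: vec.dim_insert)
  show ?thesis using lo up oS cS by simp
qed

lemma unit_increase:
  fixes \<rho> :: "('a::{field,finite} ^ 'n) set \<Rightarrow> int"
  assumes M: "qmatroid \<rho>" and T: "vec.subspace T" and U: "vec.subspace U" and TU: "T \<subseteq> U"
  shows "\<rho> U \<le> \<rho> T + int (vec.dim U) - int (vec.dim T)"
proof -
  obtain S where S: "S \<subseteq> T" "vec.independent S" "T \<subseteq> vec.span S" "card S = vec.dim T"
    using vec.basis_exists by blast
  obtain S' where S': "S \<subseteq> S'" "S' \<subseteq> U" "vec.independent S'" "U \<subseteq> vec.span S'"
    using vec.maximal_independent_subset_extend[of S U] S(1,2) TU by blast
  have fin: "finite S'" using S'(3) by (rule vec.finiteI_independent)
  have cS': "card S' = vec.dim U"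
  proof -
    have "vec.span S' = U"
    proof
      show "vec.span S' \<subseteq> U" using S'(2) U by (simp add: vec.span_minimal)
    qed (rule S'(4))
    then show ?thesis using vec.dim_span_eq_card_independent[OF S'(3)] by simp
  qed
  define R where "R = vec.span (S' - S)"
  have Rsub: "vec.subspace R" unfolding R_def by simp
  have RU: "R \<subseteq> U" unfolding R_def using S'(2) U by (intro vec.span_minimal) auto
  have sp: "vec.span (T \<union> R) = U"
  proof
    show "vec.span (T \<union> R) \<subseteq> U" using TU RU U by (simp add: vec.span_minimal)
    have "S' \<subseteq> T \<union> R" unfolding R_def using S(1) S'(1) by (auto intro: vec.span_base)
    then have "vec.span S' \<subseteq> vec.span (T \<union> R)" by (rule vec.span_mono)
    then show "U \<subseteq> vec.span (T \<union> R)" using S'(4) by blast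
  qed
  have dR: "vec.dim R \<le> card (S' - S)"
    unfolding R_def vec.dim_span using fin by (intro vec.dim_le_card) (auto intro: vec.span_base)
  have cd: "card (S' - S) = card S' - card S" using S'(1) fin
    by (intro card_Diff_subset) (auto intro: finite_subset)
  have cle: "card S \<le> card S'" using S'(1) fin by (simp add: card_mono)
  have sm: "\<rho> (vec.span (T \<union> R)) + \<rho> (T \<inter> R) \<le> \<rho> T + \<rho> R"
    using M T Rsub unfolding qmatroid_def qsubspace_def by blast
  have "0 \<le> \<rho> (T \<inter> R)" using M T Rsub vec.subspace_inter unfolding qmatroid_def qsubspace_def by blast
  moreover have "\<rho> R \<le> int (vec.dim R)" using M Rsub unfolding qmatroid_def qsubspace_def qdim_def by blast
  ultimately show ?thesis using sm sp dR cd cle cS' S(4) by simp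
qed

lemma modular:
  assumes "vec.subspace S" "vec.subspace T"
  shows "vec.dim (vec.span (S \<union> T)) + vec.dim (S \<inter> T) = vec.dim S + vec.dim T"
proof -
  have "vec.span S = S" "vec.span T = T" using assms by auto
  then have "vec.span (S \<union> T) = {x + y |x y. x \<in> S \<and> y \<in> T}"
    by (simp only: vec.span_Un)
  then show ?thesis using vec.dim_sums_Int[OF assms] by simp
qed


definition in1 :: "'a::zero ^ 'n \<Rightarrow> 'a ^ ('n::finite + 'm::finite)" where
  "in1 c = (\<chi> i. case i of Inl j \<Rightarrow> c $ j | Inr _ \<Rightarrow> 0)"

definition in2 :: "'a::zero ^ 'm \<Rightarrow> 'a ^ ('n::finite + 'm::finite)" where
  "in2 d = (\<chi> i. case i of Inl _ \<Rightarrow> 0 | Inr j \<Rightarrow> d $ j)"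

lemma proj_in[simp]:
  "proj1 (in1 c) = c" "proj2 (in1 c :: 'a::zero ^ ('n::finite + 'm::finite)) = 0"
  "proj1 (in2 d :: 'a::zero ^ ('n::finite + 'm::finite)) = 0" "proj2 (in2 d) = d"
  by (auto simp: proj1_def proj2_def in1_def in2_def vec_eq_iff)

lemma in_proj: "(x :: 'a::monoid_add ^ ('n::finite + 'm::finite)) = in1 (proj1 x) + in2 (proj2 x)"
  by (auto simp: proj1_def proj2_def in1_def in2_def vec_eq_iff split: sum.splits)

lemma proj_lin[simp]:
  "proj1 (x + y) = proj1 x + proj1 y" "proj1 (c *s x) = c *s proj1 x" "proj1 0 = 0"
  "proj2 (x + y) = proj2 x + proj2 y" "proj2 (c *s x) = c *s proj2 x" "proj2 0 = 0"
  by (auto simp: proj1_def proj2_def vec_eq_iff)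

lemma in1_linear: "Vector_Spaces.linear (*s) (*s) (in1 :: 'a::field ^ 'n \<Rightarrow> 'a ^ ('n::finite + 'm::finite))"
  by unfold_locales (auto simp: in1_def vec_eq_iff split: sum.splits)

lemma in2_linear: "Vector_Spaces.linear (*s) (*s) (in2 :: 'a::field ^ 'm \<Rightarrow> 'a ^ ('n::finite + 'm::finite))"
  by unfold_locales (auto simp: in2_def vec_eq_iff split: sum.splits)

lemma proj1_subspace: assumes "vec.subspace X" shows "vec.subspace (proj1 ` X)"
  unfolding vec.subspace_def
proof (intro conjI ballI allI)
  show "0 \<in> proj1 ` X" using assms vec.subspace_0 by (metis image_eqI proj_lin(3))
next
  fix x y assume "x \<in> proj1 ` X" "y \<in> proj1 ` X"
  then obtain x' y' where "x' \<in> X" "y' \<in> X" "x = proj1 x'" "y = proj1 y'" by blast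
  then show "x + y \<in> proj1 ` X" using assms vec.subspace_add by (metis image_eqI proj_lin(1))
next
  fix c x assume "x \<in> proj1 ` X"
  then obtain x' where "x' \<in> X" "x = proj1 x'" by blast
  then show "c *s x \<in> proj1 ` X" using assms vec.subspace_scale by (metis image_eqI proj_lin(2))
qed

lemma proj2_subspace: assumes "vec.subspace X" shows "vec.subspace (proj2 ` X)"
  unfolding vec.subspace_def
proof (intro conjI ballI allI)
  show "0 \<in> proj2 ` X" using assms vec.subspace_0 by (metis image_eqI proj_lin(6))
next
  fix x y assume "x \<in> proj2 ` X" "y \<in> proj2 ` X"
  then obtain x' y' where "x' \<in> X" "y' \<in> X" "x = proj2 x'" "y = proj2 y'" by blast
  then show "x + y \<in> proj2 ` X" using assms vec.subspace_add by (metis image_eqI proj_lin(4))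
next
  fix c x assume "x \<in> proj2 ` X"
  then obtain x' where "x' \<in> X" "x = proj2 x'" by blast
  then show "c *s x \<in> proj2 ` X" using assms vec.subspace_scale by (metis image_eqI proj_lin(5))
qed

lemma sum_form_sbn:
  assumes B1: "sym_bilinear_nondeg B1" and B2: "sym_bilinear_nondeg B2"
  shows "sym_bilinear_nondeg (sum_form B1 B2)"
  unfolding sym_bilinear_nondeg_def
proof (intro conjI allI impI)
  fix x
  show "Vector_Spaces.linear (*s) (*) (sum_form B1 B2 x)"
    by unfold_locales (auto simp: sum_form_def sbn_lin2[OF B1] sbn_lin2[OF B2] algebra_simps)
next
  fix x y show "sum_form B1 B2 x y = sum_form B1 B2 y x"
  proof -
    have "B1 (proj1 x) (proj1 y) = B1 (proj1 y) (proj1 x)" "B2 (proj2 x) (proj2 y) = B2 (proj2 y) (proj2 x)"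
      using B1 B2 unfolding sym_bilinear_nondeg_def by blast+
    then show ?thesis unfolding sum_form_def by simp
  qed
next
  fix x assume h: "\<forall>y. sum_form B1 B2 x y = 0"
  have "\<forall>y. B1 (proj1 x) y = 0"
  proof
    fix y show "B1 (proj1 x) y = 0" using h[rule_format, of "in1 y"]
      by (simp add: sum_form_def sbn_lin2[OF B2])
  qed
  then have 1: "proj1 x = 0" using B1 unfolding sym_bilinear_nondeg_def by blast
  have "\<forall>y. B2 (proj2 x) y = 0"
  proof
    fix y show "B2 (proj2 x) y = 0" using h[rule_format, of "in2 y"]
      by (simp add: sum_form_def sbn_lin2[OF B1])
  qed
  then have 2: "proj2 x = 0" using B2 unfolding sym_bilinear_nondeg_def by blast
  have "x = in1 (proj1 x) + in2 (proj2 x)" by (rule in_proj)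
  also have "\<dots> = in1 0 + in2 0" using 1 2 by simp
  also have "\<dots> = 0" by (simp add: in1_def in2_def vec_eq_iff split: sum.split)
  finally show "x = 0" .
qed

lemma sum_form_in1: "sym_bilinear_nondeg B2 \<Longrightarrow> sum_form B1 B2 (in1 c) x = B1 c (proj1 x)"
  by (simp add: sum_form_def sbn_lin2)

lemma sum_form_in2: "sym_bilinear_nondeg B1 \<Longrightarrow> sum_form B1 B2 (in2 d) x = B2 d (proj2 x)"
  by (simp add: sum_form_def sbn_lin2)

lemma dim_UNIV_card: "vec.dim (UNIV :: ('a::field ^ 'n) set) = CARD('n)"
  by (simp add: card_cart_basis)

lemma dim_Un_le: "vec.dim (P \<union> Q) \<le> vec.dim P + vec.dim Q"
proof -
  obtain bP where P: "bP \<subseteq> P" "vec.independent bP" "P \<subseteq> vec.span bP" "card bP = vec.dim P"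
    using vec.basis_exists by blast
  obtain bQ where Q: "bQ \<subseteq> Q" "vec.independent bQ" "Q \<subseteq> vec.span bQ" "card bQ = vec.dim Q"
    using vec.basis_exists by blast
  have f: "finite (bP \<union> bQ)" using P(2) Q(2) vec.finiteI_independent by blast
  have "P \<union> Q \<subseteq> vec.span (bP \<union> bQ)" using P(3) Q(3) vec.span_mono[of bP "bP \<union> bQ"]
     vec.span_mono[of bQ "bP \<union> bQ"] by blast
  then have "vec.dim (P \<union> Q) \<le> card (bP \<union> bQ)" using f by (rule vec.dim_le_card)
  also have "\<dots> \<le> card bP + card bQ" by (rule card_Un_le)
  finally show ?thesis using P(4) Q(4) by simp
qed

lemma dim_W_le:
  fixes C :: "('a::field ^ 'n::finite) set" and D :: "('a ^ 'm::finite) set"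
  shows "vec.dim (vec.span ((in1 ` C :: ('a ^ ('n + 'm)) set) \<union> in2 ` D)) \<le> vec.dim C + vec.dim D"
proof -
  have "vec.dim (in1 ` C :: ('a ^ ('n + 'm)) set) \<le> vec.dim C"
    by (rule vec.dim_image_le[OF in1_linear])
  moreover have "vec.dim (in2 ` D :: ('a ^ ('n + 'm)) set) \<le> vec.dim D"
    by (rule vec.dim_image_le[OF in2_linear])
  ultimately show ?thesis using dim_Un_le[of "in1 ` C :: ('a ^ ('n + 'm)) set" "in2 ` D"] by simp
qed

lemma Min_dom:
  fixes g :: "'x \<Rightarrow> int" and h :: "'y \<Rightarrow> int"
  assumes "finite {X. P X}" "finite {Y. Q Y}" "P x0" "Q y0"
    and gh: "\<And>X. P X \<Longrightarrow> \<exists>Y. Q Y \<and> h Y + d \<le> g X + c"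
    and hg: "\<And>Y. Q Y \<Longrightarrow> \<exists>X. P X \<and> g X + c \<le> h Y + d"
  shows "Min {g X | X. P X} + c = Min {h Y | Y. Q Y} + d"
proof -
  have fG: "finite {g X | X. P X}" using assms(1) by (rule finite_image_set)
  have fH: "finite {h Y | Y. Q Y}" using assms(2) by (rule finite_image_set)
  have nG: "{g X | X. P X} \<noteq> {}" using assms(3) by blast
  have nH: "{h Y | Y. Q Y} \<noteq> {}" using assms(4) by blast
  obtain X0 where X0: "P X0" "g X0 = Min {g X | X. P X}"
  proof -
    from Min_in[OF fG nG] obtain X where "P X" "Min {g X | X. P X} = g X" by auto
    then show ?thesis using that by simp
  qed
  obtain Y0 where Y0: "Q Y0" "h Y0 = Min {h Y | Y. Q Y}"
  proof -
    from Min_in[OF fH nH] obtain Y where "Q Y" "Min {h Y | Y. Q Y} = h Y" by auto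
    then show ?thesis using that by simp
  qed
  obtain Y1 where Y1: "Q Y1" "h Y1 + d \<le> g X0 + c" using gh[OF X0(1)] by blast
  obtain X1 where X1: "P X1" "g X1 + c \<le> h Y0 + d" using hg[OF Y0(1)] by blast
  have "Min {h Y | Y. Q Y} \<le> h Y1" using fH Y1(1) by (intro Min_le) auto
  moreover have "Min {g X | X. P X} \<le> g X1" using fG X1(1) by (intro Min_le) auto
  ultimately show ?thesis using X0 Y0 Y1 X1 by linarith
qed


lemma qm_mono: "qmatroid \<rho> \<Longrightarrow> vec.subspace V \<Longrightarrow> vec.subspace W \<Longrightarrow> V \<subseteq> W \<Longrightarrow> \<rho> V \<le> \<rho> W"
  unfolding qmatroid_def qsubspace_def by blast

lemma N_sum: "vec.dim (UNIV :: ('a::field ^ ('n::finite + 'm::finite)) set)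
   = vec.dim (UNIV :: ('a ^ 'n) set) + vec.dim (UNIV :: ('a ^ 'm) set)"
  by (simp add: card_cart_basis card_UNIV_sum)

lemma key:
  fixes \<rho>1 :: "('a::{field,finite} ^ 'n) set \<Rightarrow> int"
    and \<rho>2 :: "('a ^ 'm) set \<Rightarrow> int"
    and B1 :: "'a ^ 'n \<Rightarrow> 'a ^ 'n \<Rightarrow> 'a"
    and B2 :: "'a ^ 'm \<Rightarrow> 'a ^ 'm \<Rightarrow> 'a"
    and V :: "('a ^ ('n + 'm)) set"
  assumes M1: "qmatroid \<rho>1" and M2: "qmatroid \<rho>2"
    and B1: "sym_bilinear_nondeg B1" and B2: "sym_bilinear_nondeg B2"
    and V: "vec.subspace V"
  shows "int (vec.dim (orth (sum_form B1 B2) V)) +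
     Min {\<rho>1 (proj1 ` Y) + \<rho>2 (proj2 ` Y) - qdim Y | Y. qsubspace Y \<and> Y \<subseteq> orth (sum_form B1 B2) V}
   = Min {qdual B1 \<rho>1 (proj1 ` X) + qdual B2 \<rho>2 (proj2 ` X) - qdim X | X. qsubspace X \<and> X \<subseteq> V}
     + (\<rho>1 UNIV + \<rho>2 UNIV)"
proof -
  let ?S = "sum_form B1 B2"
  have S: "sym_bilinear_nondeg ?S" using B1 B2 by (rule sum_form_sbn)
  let ?N = "vec.dim (UNIV :: ('a ^ ('n + 'm)) set)"
  let ?N1 = "vec.dim (UNIV :: ('a ^ 'n) set)"
  let ?N2 = "vec.dim (UNIV :: ('a ^ 'm) set)"
  have NN: "?N = ?N1 + ?N2" by (rule N_sum)
  have oV: "vec.dim (orth ?S V) + vec.dim V = ?N" using S by (rule orth_dim)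
  have "Min {qdual B1 \<rho>1 (proj1 ` X) + qdual B2 \<rho>2 (proj2 ` X) - qdim X | X. qsubspace X \<and> X \<subseteq> V}
     + (\<rho>1 UNIV + \<rho>2 UNIV) =
     Min {\<rho>1 (proj1 ` Y) + \<rho>2 (proj2 ` Y) - qdim Y | Y. qsubspace Y \<and> Y \<subseteq> orth ?S V}
     + int (vec.dim (orth ?S V))"
  proof (rule Min_dom)
    show "finite {X :: ('a ^ ('n + 'm)) set. qsubspace X \<and> X \<subseteq> V}" by simp
    show "finite {Y :: ('a ^ ('n + 'm)) set. qsubspace Y \<and> Y \<subseteq> orth ?S V}" by simp
    show "qsubspace {0} \<and> {0} \<subseteq> V" using V unfolding qsubspace_def
      by (simp add: vec.subspace_0)
    show "qsubspace {0} \<and> {0} \<subseteq> orth ?S V" using orth_subspace[OF S] unfolding qsubspace_def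
      by (simp add: vec.subspace_0)
  next
    fix X :: "('a ^ ('n + 'm)) set"
    assume X: "qsubspace X \<and> X \<subseteq> V"
    define A where "A = proj1 ` X"
    define Bq where "Bq = proj2 ` X"
    define W where "W = (vec.span (in1 ` A \<union> in2 ` Bq) :: ('a ^ ('n + 'm)) set)"
    define Y where "Y = orth ?S (V \<union> W)"
    have sX: "vec.subspace X" using X unfolding qsubspace_def by blast
    have sY: "vec.subspace Y" unfolding Y_def using S by (rule orth_subspace)
    have YV: "Y \<subseteq> orth ?S V" unfolding Y_def by (rule orth_anti) blast
    have p1: "proj1 ` Y \<subseteq> orth B1 A"
    proof (rule subsetI, unfold orth_def, safe)
      fix y a assume y: "y \<in> Y" and a: "a \<in> A"
      have "in1 a \<in> W" unfolding W_def using a by (auto intro: vec.span_base)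
      then have "?S (in1 a) y = 0" using y unfolding Y_def orth_def by blast
      then show "B1 a (proj1 y) = 0" using sum_form_in1[OF B2, of B1 a y] by simp
    qed
    have p2: "proj2 ` Y \<subseteq> orth B2 Bq"
    proof (rule subsetI, unfold orth_def, safe)
      fix y a assume y: "y \<in> Y" and a: "a \<in> Bq"
      have "in2 a \<in> W" unfolding W_def using a by (auto intro: vec.span_base)
      then have "?S (in2 a) y = 0" using y unfolding Y_def orth_def by blast
      then show "B2 a (proj2 y) = 0" using sum_form_in2[OF B1, of B2 a y] by simp
    qed
    have r1: "\<rho>1 (proj1 ` Y) \<le> \<rho>1 (orth B1 A)"
      by (rule qm_mono[OF M1 proj1_subspace[OF sY] orth_subspace[OF B1] p1])
    have r2: "\<rho>2 (proj2 ` Y) \<le> \<rho>2 (orth B2 Bq)"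
      by (rule qm_mono[OF M2 proj2_subspace[OF sY] orth_subspace[OF B2] p2])
    have oY: "vec.dim Y + vec.dim (V \<union> W) = ?N" unfolding Y_def using S by (rule orth_dim)
    have sW: "vec.subspace W" unfolding W_def by simp
    have md: "vec.dim (vec.span (V \<union> W)) + vec.dim (V \<inter> W) = vec.dim V + vec.dim W"
      by (rule modular[OF V sW])
    have dW: "vec.dim W \<le> vec.dim A + vec.dim Bq" unfolding W_def by (rule dim_W_le)
    have XVW: "X \<subseteq> V \<inter> W"
    proof
      fix x assume x: "x \<in> X"
      have "in1 (proj1 x) \<in> W" "in2 (proj2 x) \<in> W"
        unfolding W_def A_def Bq_def using x by (auto intro: vec.span_base)
      then have "in1 (proj1 x) + in2 (proj2 x) \<in> W" unfolding W_def by (rule vec.span_add)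
      then show "x \<in> V \<inter> W" using x X in_proj[of x] by auto
    qed
    have dX: "vec.dim X \<le> vec.dim (V \<inter> W)" using XVW by (rule vec.dim_subset)
    have dVW: "vec.dim (V \<union> W) = vec.dim (vec.span (V \<union> W))" by simp
    show "\<exists>Y. (qsubspace Y \<and> Y \<subseteq> orth ?S V) \<and>
        \<rho>1 (proj1 ` Y) + \<rho>2 (proj2 ` Y) - qdim Y + int (vec.dim (orth ?S V))
        \<le> qdual B1 \<rho>1 (proj1 ` X) + qdual B2 \<rho>2 (proj2 ` X) - qdim X + (\<rho>1 UNIV + \<rho>2 UNIV)"
    proof (intro exI conjI)
      show "qsubspace Y" using sY unfolding qsubspace_def .
      show "Y \<subseteq> orth ?S V" by (rule YV)
      show "\<rho>1 (proj1 ` Y) + \<rho>2 (proj2 ` Y) - qdim Y + int (vec.dim (orth ?S V))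
        \<le> qdual B1 \<rho>1 (proj1 ` X) + qdual B2 \<rho>2 (proj2 ` X) - qdim X + (\<rho>1 UNIV + \<rho>2 UNIV)"
        unfolding qdual_def qdim_def A_def[symmetric] Bq_def[symmetric]
        using r1 r2 oY md dW dX dVW oV by linarith
    qed
  next
    fix Y :: "('a ^ ('n + 'm)) set"
    assume Y: "qsubspace Y \<and> Y \<subseteq> orth ?S V"
    have sY: "vec.subspace Y" using Y unfolding qsubspace_def by blast
    define C where "C = proj1 ` Y"
    define D where "D = proj2 ` Y"
    define W where "W = (vec.span (in1 ` C \<union> in2 ` D) :: ('a ^ ('n + 'm)) set)"
    define X where "X = V \<inter> orth ?S W"
    define A where "A = proj1 ` X"
    define Bq where "Bq = proj2 ` X"
    have sX: "vec.subspace X" unfolding X_def using V orth_subspace[OF S] by (rule vec.subspace_inter)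
    have sC: "vec.subspace C" unfolding C_def using sY by (rule proj1_subspace)
    have sD: "vec.subspace D" unfolding D_def using sY by (rule proj2_subspace)
    have AC: "A \<subseteq> orth B1 C"
    proof (rule subsetI, unfold orth_def, safe)
      fix c x assume x: "x \<in> A" and c: "c \<in> C"
      then obtain x' where x': "x' \<in> X" "x = proj1 x'" unfolding A_def by blast
      have "in1 c \<in> W" unfolding W_def using c by (auto intro: vec.span_base)
      then have "?S (in1 c) x' = 0" using x' unfolding X_def orth_def by blast
      then show "B1 c x = 0" using sum_form_in1[OF B2, of B1 c x'] x' by simp
    qed
    have BD: "Bq \<subseteq> orth B2 D"
    proof (rule subsetI, unfold orth_def, safe)
      fix c x assume x: "x \<in> Bq" and c: "c \<in> D"
      then obtain x' where x': "x' \<in> X" "x = proj2 x'" unfolding Bq_def by blast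
      have "in2 c \<in> W" unfolding W_def using c by (auto intro: vec.span_base)
      then have "?S (in2 c) x' = 0" using x' unfolding X_def orth_def by blast
      then show "B2 c x = 0" using sum_form_in2[OF B1, of B2 c x'] x' by simp
    qed
    have CA: "C \<subseteq> orth B1 A" using orth_orth[OF B1, of C] orth_anti[OF AC] by blast
    have DB: "D \<subseteq> orth B2 Bq" using orth_orth[OF B2, of D] orth_anti[OF BD] by blast
    have u1: "\<rho>1 (orth B1 A) \<le> \<rho>1 C + int (vec.dim (orth B1 A)) - int (vec.dim C)"
      by (rule unit_increase[OF M1 sC orth_subspace[OF B1] CA])
    have u2: "\<rho>2 (orth B2 Bq) \<le> \<rho>2 D + int (vec.dim (orth B2 Bq)) - int (vec.dim D)"
      by (rule unit_increase[OF M2 sD orth_subspace[OF B2] DB])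
    have oA: "vec.dim (orth B1 A) + vec.dim A = ?N1" using B1 by (rule orth_dim)
    have oB: "vec.dim (orth B2 Bq) + vec.dim Bq = ?N2" using B2 by (rule orth_dim)
    have oW: "vec.dim (orth ?S W) + vec.dim W = ?N" using S by (rule orth_dim)
    have dW: "vec.dim W \<le> vec.dim C + vec.dim D" unfolding W_def by (rule dim_W_le)
    have md: "vec.dim (vec.span (V \<union> orth ?S W)) + vec.dim X = vec.dim V + vec.dim (orth ?S W)"
      unfolding X_def by (rule modular[OF V orth_subspace[OF S]])
    have oVW: "vec.dim (orth ?S (V \<union> orth ?S W)) + vec.dim (V \<union> orth ?S W) = ?N"
      using S by (rule orth_dim)
    have YW: "Y \<subseteq> W"
    proof
      fix y assume y: "y \<in> Y"
      have "in1 (proj1 y) \<in> W" "in2 (proj2 y) \<in> W"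
        unfolding W_def C_def D_def using y by (auto intro: vec.span_base)
      then have "in1 (proj1 y) + in2 (proj2 y) \<in> W" unfolding W_def by (rule vec.span_add)
      then show "y \<in> W" using in_proj[of y] by simp
    qed
    have "Y \<subseteq> orth ?S (V \<union> orth ?S W)"
      using Y YW orth_orth[OF S, of W] unfolding orth_Un by blast
    then have dY: "vec.dim Y \<le> vec.dim (orth ?S (V \<union> orth ?S W))" by (rule vec.dim_subset)
    have dVW: "vec.dim (V \<union> orth ?S W) = vec.dim (vec.span (V \<union> orth ?S W))" by simp
    show "\<exists>X. (qsubspace X \<and> X \<subseteq> V) \<and>
        qdual B1 \<rho>1 (proj1 ` X) + qdual B2 \<rho>2 (proj2 ` X) - qdim X + (\<rho>1 UNIV + \<rho>2 UNIV)
        \<le> \<rho>1 (proj1 ` Y) + \<rho>2 (proj2 ` Y) - qdim Y + int (vec.dim (orth ?S V))"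
    proof (intro exI conjI)
      show "qsubspace X" using sX unfolding qsubspace_def .
      show "X \<subseteq> V" unfolding X_def by blast
      show "qdual B1 \<rho>1 (proj1 ` X) + qdual B2 \<rho>2 (proj2 ` X) - qdim X + (\<rho>1 UNIV + \<rho>2 UNIV)
        \<le> \<rho>1 (proj1 ` Y) + \<rho>2 (proj2 ` Y) - qdim Y + int (vec.dim (orth ?S V))"
        unfolding qdual_def qdim_def A_def[symmetric] Bq_def[symmetric] C_def[symmetric] D_def[symmetric]
        using u1 u2 oA oB oW dW md oVW dY dVW oV NN by linarith
    qed
  qed
  then show ?thesis by linarith
qed


lemma orth_zero: "sym_bilinear_nondeg B \<Longrightarrow> orth B {0} = UNIV"
  unfolding orth_def using sbn_lin2 by auto

lemma dim_zero: "vec.dim {0::'a::field ^ 'n} = 0"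
  using vec.dim_insert[of 0 "{}"] by simp

theorem theorem5p10:
  fixes \<rho>1 :: "('a::{field,finite} ^ 'n) set \<Rightarrow> int"
    and \<rho>2 :: "('a ^ 'm) set \<Rightarrow> int"
    and B1 :: "'a ^ 'n \<Rightarrow> 'a ^ 'n \<Rightarrow> 'a"
    and B2 :: "'a ^ 'm \<Rightarrow> 'a ^ 'm \<Rightarrow> 'a"
  assumes "qmatroid \<rho>1" and "qmatroid \<rho>2"
    and "sym_bilinear_nondeg B1" and "sym_bilinear_nondeg B2"
  shows "sym_bilinear_nondeg (sum_form B1 B2) \<and>
    (\<forall>V. qsubspace V \<longrightarrow>
       qdual (sum_form B1 B2) (qdirect_sum \<rho>1 \<rho>2) V
       = qdirect_sum (qdual B1 \<rho>1) (qdual B2 \<rho>2) V)"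
proof
  note M1 = assms(1) and M2 = assms(2) and B1 = assms(3) and B2 = assms(4)
  let ?S = "sum_form B1 B2"
  show S: "sym_bilinear_nondeg ?S" using B1 B2 by (rule sum_form_sbn)
  let ?K = "\<lambda>V. Min {qdual B1 \<rho>1 (proj1 ` X) + qdual B2 \<rho>2 (proj2 ` X) - qdim X | X. qsubspace X \<and> X \<subseteq> V}"
  have ds: "qdirect_sum \<rho>1 \<rho>2 (orth ?S V) = ?K V + (\<rho>1 UNIV + \<rho>2 UNIV)"
    if V: "vec.subspace V" for V :: "('a ^ ('n + 'm)) set"
    unfolding qdirect_sum_def qdim_def[of "orth ?S V"]
    using key[OF M1 M2 B1 B2 V] by simp
  have K0: "?K {0} = 0"
  proof -
    have "{qdual B1 \<rho>1 (proj1 ` X) + qdual B2 \<rho>2 (proj2 ` X) - qdim X | X. qsubspace X \<and> X \<subseteq> {0}} = {0}"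
    proof -
      have "qsubspace X \<and> X \<subseteq> {0} \<longleftrightarrow> X = {0}" for X :: "('a ^ ('n + 'm)) set"
        unfolding qsubspace_def using vec.subspace_0[of X] by (auto simp: vec.subspace_def)
      moreover have "qdual B1 \<rho>1 (proj1 ` {0}) + qdual B2 \<rho>2 (proj2 ` ({0} :: ('a ^ ('n + 'm)) set))
          - qdim ({0} :: ('a ^ ('n + 'm)) set) = 0"
        by (simp add: qdual_def qdim_def dim_zero orth_zero[OF B1] orth_zero[OF B2])
      ultimately show ?thesis by auto
    qed
    then show ?thesis by simp
  qed
  have U: "qdirect_sum \<rho>1 \<rho>2 UNIV = \<rho>1 UNIV + \<rho>2 UNIV"
    using ds[of "{0}"] K0 orth_zero[OF S] by (simp add: vec.subspace_0 vec.subspace_def)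
  show "\<forall>V. qsubspace V \<longrightarrow>
       qdual ?S (qdirect_sum \<rho>1 \<rho>2) V = qdirect_sum (qdual B1 \<rho>1) (qdual B2 \<rho>2) V"
  proof (intro allI impI)
    fix V :: "('a ^ ('n + 'm)) set" assume "qsubspace V"
    then have V: "vec.subspace V" unfolding qsubspace_def .
    show "qdual ?S (qdirect_sum \<rho>1 \<rho>2) V = qdirect_sum (qdual B1 \<rho>1) (qdual B2 \<rho>2) V"
      unfolding qdual_def[of ?S] qdirect_sum_def[of "qdual B1 \<rho>1"] using ds[OF V] U by simp
  qed
qed

end
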